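(* Let $\nu<0$ and define $\mathcal{R}_\nu:\mathbb{R}\to\mathbb{R}$ by $$\mathcal{R}_\nu(x):=\frac{(H_{\nu-1}(x))^2}{H_{\nu}(x)\,H_{\nu-2}(x)},\qquad x\in\mathbb{R},$$ where $H_\alpha$ denotes the Hermite function of index $\alpha$. Then $\mathcal{R}_\nu$ is strictly decreasing on $\mathbb{R}$.
   Context: For $\alpha<0$, the Hermite function $H_\alpha:\mathbb{R}\to\mathbb{R}$ is the solution of the ODE $u''(x)-2xu'(x)+2\alpha u(x)=0$ given by the integral representation $$H_\alpha(x)=\frac{1}{\Gamma(-\alpha)}\int_0^\infty t^{-\alpha-1}e^{-t^2-2xt}\,dt,\qquad x\in\mathbb{R},$$ where $\Gamma$ is Euler's Gamma function. In particular $H_\alpha(x)>0$ for all $x$ when $\alpha<0$, so $\mathcal{R}_\nu$ is well defined. *)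

theory Defs
  imports "HOL-Analysis.Analysis"
begin

text \<open>Hermite function of negative index alpha, via the integral representation
  H_alpha(x) = 1/Gamma(-alpha) * integral over (0,inf) of t^(-alpha-1) e^(-t^2-2xt) dt.\<close>
definition hermite_fun :: "real \<Rightarrow> real \<Rightarrow> real" where
  "hermite_fun \<alpha> x =
     (1 / Gamma (- \<alpha>)) *
     integral {0<..} (\<lambda>t. t powr (- \<alpha> - 1) * exp (- (t ^ 2) - 2 * x * t))"

definition R_ratio :: "real \<Rightarrow> real \<Rightarrow> real" where
  "R_ratio \<nu> x = (hermite_fun (\<nu> - 1) x) ^ 2 /
                  (hermite_fun \<nu> x * hermite_fun (\<nu> - 2) x)"

end

theory Submission imports Defs "HOL-Real_Asymp.Real_Asymp" begin

definition w :: "real \<Rightarrow> real \<Rightarrow> real \<Rightarrow> real" where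
  "w p x t = t powr p * exp (- (t ^ 2) - 2 * x * t)"

definition FF :: "real \<Rightarrow> real \<Rightarrow> real" where
  "FF p x = integral {0<..} (w p x)"

lemma hermite_FF: "hermite_fun \<alpha> x = FF (- \<alpha> - 1) x / Gamma (- \<alpha>)"
  by (simp add: hermite_fun_def FF_def w_def[abs_def])

lemma w_nonneg: "w p x t \<ge> 0"
  by (simp add: w_def)

lemma w_pos: "t > 0 \<Longrightarrow> w p x t > 0"
  by (simp add: w_def)

lemma cont_w: "continuous_on {0<..} (w p x)"
  unfolding w_def by (intro continuous_intros) auto

lemma w_bound: "w p x t \<le> exp ((1 - 2*x)^2/4) * (t powr p / exp t)"
proof -
  have "- (t ^ 2) - 2 * x * t \<le> (1 - 2*x)^2/4 + (- t)"
    using zero_le_power2[of "t - (1 - 2*x)/2"] by (simp add: power2_eq_square field_simps)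
  hence "exp (- (t ^ 2) - 2 * x * t) \<le> exp ((1 - 2*x)^2/4) * exp (- t)"
    by (simp add: exp_add[symmetric])
  hence "t powr p * exp (- (t ^ 2) - 2 * x * t) \<le> t powr p * (exp ((1 - 2*x)^2/4) * exp (- t))"
    by (intro mult_left_mono) auto
  thus ?thesis by (simp add: w_def exp_minus field_simps)
qed

lemma gamma_int: fixes p :: real assumes "p > -1" shows "(\<lambda>t. t powr p / exp t) integrable_on {0<..}"
proof -
  have "(\<lambda>t. t powr ((p+1) - 1) / exp t) integrable_on {0..}"
    using Gamma_integral_real[of "p+1"] assms by (auto simp: integrable_on_def)
  hence "(\<lambda>t. t powr p / exp t) integrable_on {0..}" by simp
  thus ?thesis
    by (rule integrable_spike_set) (auto intro: negligible_subset[OF negligible_sing[of 0]])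
qed

lemma w_absint: assumes "p > -1" shows "w p x absolutely_integrable_on {0<..}"
proof (rule measurable_bounded_by_integrable_imp_absolutely_integrable)
  show "w p x \<in> borel_measurable (lebesgue_on {0<..})"
    by (rule continuous_imp_measurable_on_sets_lebesgue[OF cont_w]) auto
  show "(\<lambda>t. exp ((1 - 2*x)^2/4) * (t powr p / exp t)) integrable_on {0<..}"
    using integrable_on_cmult_left[OF gamma_int[OF assms]] by simp
  show "norm (w p x t) \<le> exp ((1 - 2*x)^2/4) * (t powr p / exp t)" if "t \<in> {0<..}" for t
    using w_bound[of p x t] w_nonneg[of p x t] by simp
qed auto

lemma w_int: "p > -1 \<Longrightarrow> w p x integrable_on {0<..}"
  using w_absint set_lebesgue_integral_eq_integral(1) by blast

lemma w_shift: "t > 0 \<Longrightarrow> w (p + real k) x t = w p x t * t ^ k"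
  by (simp add: w_def powr_add powr_realpow)

lemma w_shift1: "t > 0 \<Longrightarrow> w (p + 1) x t = w p x t * t"
  using w_shift[of t p 1 x] by simp
lemma w_shift2: "t > 0 \<Longrightarrow> w (p + 2) x t = w p x t * t^2"
  using w_shift[of t p 2 x] by simp
lemma w_shift3: "t > 0 \<Longrightarrow> w (p + 3) x t = w p x t * t^3"
  using w_shift[of t p 3 x] by simp
lemma w_shift4: "t > 0 \<Longrightarrow> w (p + 4) x t = w p x t * t^4"
  using w_shift[of t p 4 x] by simp

lemma integral_pos_open:
  fixes f :: "real \<Rightarrow> real"
  assumes fi: "f integrable_on {0<..}" and fc: "continuous_on {0<..} f"
    and nn: "\<And>t. t > 0 \<Longrightarrow> f t \<ge> 0" and t0: "t0 > 0" "f t0 > 0"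
  shows "integral {0<..} f > 0"
proof -
  let ?I = "{t0/2..2*t0}"
  have sub: "?I \<subseteq> {0<..}" using t0 by auto
  have cI: "continuous_on ?I f" using continuous_on_subset[OF fc sub] .
  have iI: "f integrable_on ?I" by (rule integrable_continuous_interval[OF cI])
  have le: "integral ?I f \<le> integral {0<..} f"
    by (rule integral_subset_le[OF sub iI fi]) (use nn in auto)
  have ge: "integral ?I f \<ge> 0"
    by (rule integral_nonneg[OF iI]) (use nn t0 in auto)
  have "integral ?I f \<noteq> 0"
  proof
    assume "integral ?I f = 0"
    hence "(f has_integral 0) (cbox (t0/2) (2*t0))"
      using integrable_integral[OF iI] by simp
    hence "f t0 = 0"
      by (rule has_integral_0_cbox_imp_0[rotated 2]) (use cI nn t0 in auto)
    thus False using t0 by simp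
  qed
  thus ?thesis using le ge by linarith
qed

lemma FF_pos: "p > -1 \<Longrightarrow> FF p x > 0"
  unfolding FF_def
  by (rule integral_pos_open[of _ 1]) (auto simp: w_nonneg w_pos w_int cont_w)

lemma FF_has: "p > -1 \<Longrightarrow> (w p x has_integral FF p x) {0<..}"
  unfolding FF_def by (rule integrable_integral[OF w_int])

lemma QF:
  assumes p: "p > -1" and s: "c \<noteq> 0"
  shows "a^2 * FF p x + 2*a*b * FF (p+1) x + (b^2 + 2*a*c) * FF (p+2) x
         + 2*b*c * FF (p+3) x + c^2 * FF (p+4) x > 0"
proof -
  let ?g = "\<lambda>t. w p x t * (a + b*t + c*t^2)^2"
  let ?h = "\<lambda>t. a^2 * w p x t + 2*a*b * w (p+1) x t + (b^2 + 2*a*c) * w (p+2) x t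
         + 2*b*c * w (p+3) x t + c^2 * w (p+4) x t"
  let ?S = "a^2 * FF p x + 2*a*b * FF (p+1) x + (b^2 + 2*a*c) * FF (p+2) x
         + 2*b*c * FF (p+3) x + c^2 * FF (p+4) x"
  have hh: "(?h has_integral ?S) {0<..}"
    using p by (intro has_integral_add has_integral_mult_right FF_has) auto
  have hg_eq: "?h t = ?g t" if "t \<in> {0<..}" for t
  proof -
    have t: "t > 0" using that by simp
    have e: "(a + b*t + c*t^2)^2 = a^2 + 2*a*b*t + (b^2+2*a*c)*t^2 + 2*b*c*t^3 + c^2*t^4"
      by (simp add: power2_eq_square power3_eq_cube power4_eq_xxxx algebra_simps)
    show ?thesis unfolding w_shift1[OF t] w_shift2[OF t] w_shift3[OF t] w_shift4[OF t] e
      by (simp add: ring_distribs mult.assoc mult.left_commute)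
  qed
  have hg: "(?g has_integral ?S) {0<..}"
    by (rule has_integral_eq[OF hg_eq hh])
  obtain t0 where t0: "t0 \<in> {1,2,3::real}" "a + b*t0 + c*t0^2 \<noteq> 0"
  proof -
    have "\<not> (a + b*1 + c*1^2 = 0 \<and> a + b*2 + c*2^2 = 0 \<and> a + b*3 + c*3^2 = 0)"
      using s by auto
    thus ?thesis using that by blast
  qed
  have "integral {0<..} ?g > 0"
  proof (rule integral_pos_open[of _ t0])
    show "?g integrable_on {0<..}" using hg by blast
    show "continuous_on {0<..} ?g" by (intro continuous_intros cont_w)
    show "t > 0 \<Longrightarrow> ?g t \<ge> 0" for t by (simp add: w_nonneg)
    show "t0 > 0" using t0 by auto
    show "?g t0 > 0" using t0 w_pos[of t0 p x] by auto
  qed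
  thus ?thesis using integral_unique[OF hg] by simp
qed


lemma absint_lborel:
  fixes f :: "real \<Rightarrow> real"
  assumes "f absolutely_integrable_on S" "S \<in> sets borel" "f \<in> borel_measurable borel"
  shows "set_integrable lborel S f"
  using assms unfolding set_integrable_def
  by (subst integrable_completion[symmetric]) auto

lemma w_meas: "w p x \<in> borel_measurable borel"
  unfolding w_def by measurable

lemma recur:
  assumes p: "p > -1"
  shows "(p+1) * FF p x = 2 * FF (p+2) x + 2*x * FF (p+1) x"
proof -
  define f' where "f' = (\<lambda>t. (p+1) * w p x t - 2 * w (p+2) x t - 2*x * w (p+1) x t)"
  define \<Phi> where "\<Phi> = (\<lambda>t. t powr (p+1) * exp (- (t ^ 2) - 2 * x * t))"
  have hf: "(f' has_integral ((p+1) * FF p x - 2 * FF (p+2) x - 2*x * FF (p+1) x)) {0<..}"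
    unfolding f'_def using p by (intro has_integral_diff has_integral_mult_right FF_has) auto
  have absf: "f' absolutely_integrable_on {0<..}"
    unfolding f'_def using p
    by (intro set_integral_diff(1) set_integrable_mult_right w_absint) auto
  have meas: "f' \<in> borel_measurable borel"
    unfolding f'_def using w_meas by measurable
  have lb: "set_integrable lborel (einterval 0 \<infinity>) f'"
    using absint_lborel[OF absf _ meas] by (simp add: zero_ereal_def)
  have contf: "continuous_on {0<..} f'"
    unfolding f'_def by (intro continuous_intros cont_w)
  have "(LBINT t=0..\<infinity>. f' t) = 0 - 0"
  proof (rule interval_integral_FTC_integrable[OF _ _ _ lb])
    show "(0::ereal) < \<infinity>" by simp
    fix t assume t: "0 < ereal t" "ereal t < \<infinity>"
    hence t0: "t > 0" by (simp add: zero_ereal_def)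
    show "isCont f' t"
      using contf t0 continuous_on_eq_continuous_at[of "{0<..}" f'] by auto
    have "(\<Phi> has_real_derivative
        ((p+1) * t powr (p+1-1) * exp (- (t ^ 2) - 2 * x * t)
          + t powr (p+1) * (exp (- (t ^ 2) - 2 * x * t) * (- (2 * t) - 2 * x)))) (at t)"
      unfolding \<Phi>_def using t0
      by (auto intro!: derivative_eq_intros simp: power2_eq_square algebra_simps)
    moreover have "((p+1) * t powr (p+1-1) * exp (- (t ^ 2) - 2 * x * t)
          + t powr (p+1) * (exp (- (t ^ 2) - 2 * x * t) * (- (2 * t) - 2 * x))) = f' t"
      unfolding f'_def w_shift1[OF t0] w_shift2[OF t0]
      using t0 by (simp add: w_def powr_add power2_eq_square algebra_simps)
    ultimately show "(\<Phi> has_vector_derivative f' t) (at t)"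
      by (simp add: has_real_derivative_iff_has_vector_derivative)
  next
    show "((\<Phi> \<circ> real_of_ereal) \<longlongrightarrow> 0) (at_right 0)"
      unfolding zero_ereal_def ereal_tendsto_simps1 \<Phi>_def using p by real_asymp
    show "((\<Phi> \<circ> real_of_ereal) \<longlongrightarrow> 0) (at_left \<infinity>)"
      unfolding ereal_tendsto_simps1 \<Phi>_def by real_asymp
  qed
  moreover have "(LBINT t=0..\<infinity>. f' t) = integral {0<..} f'"
    using lb set_borel_integral_eq_integral(2)[of "{0<..}" f']
    by (simp add: interval_integral_to_infinity_eq zero_ereal_def)
  ultimately have "integral {0<..} f' = 0" by simp
  with integral_unique[OF hf] show ?thesis by simp
qed


lemma abs_exp_minus_one: fixes u :: real shows "\<bar>exp u - 1\<bar> \<le> \<bar>u\<bar> * exp \<bar>u\<bar>"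
proof (cases "u \<ge> 0")
  case True
  have "1 - u \<le> exp (- u)" using exp_ge_add_one_self[of "- u"] by simp
  hence "(1 - u) * exp u \<le> exp (- u) * exp u" by (intro mult_right_mono) auto
  hence "(1 - u) * exp u \<le> 1" by (simp add: exp_minus field_simps)
  moreover have "exp u \<ge> 1" using True by simp
  ultimately show ?thesis using True by (simp add: algebra_simps)
next
  case False
  have "1 + u \<le> exp u" using exp_ge_add_one_self[of u] by simp
  moreover have "exp u \<le> 1" using False by simp
  moreover have "- u \<le> - u * exp (- u)" using False by simp
  moreover have e: "\<bar>exp u - 1\<bar> = 1 - exp u" "\<bar>u\<bar> = - u" using False by auto
  ultimately show ?thesis unfolding e by linarith
qed

lemma deriv_seq:
  fixes f :: "real \<Rightarrow> real"
  assumes "(f has_real_derivative D) (at x)" "X \<longlonglongrightarrow> x" "\<And>i. X i \<noteq> x"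
  shows "(\<lambda>i. (f (X i) - f x) / (X i - x)) \<longlonglongrightarrow> D"
proof -
  have "((\<lambda>y. (f y - f x) / (y - x)) \<longlongrightarrow> D) (at x within UNIV)"
    using assms(1) has_field_derivative_iff by blast
  hence "((\<lambda>y. (f y - f x) / (y - x)) \<circ> X) \<longlonglongrightarrow> D"
    unfolding tendsto_at_iff_sequentially using assms(2,3) by blast
  thus ?thesis by (simp add: o_def)
qed

lemma w_move: "w p y t = w p x t * exp (- 2 * (y - x) * t)"
  by (simp add: w_def exp_add[symmetric] algebra_simps)

lemma FF_deriv:
  assumes p: "p > -1"
  shows "((\<lambda>y. FF p y) has_real_derivative (-2 * FF (p+1) x)) (at x)"
  unfolding has_field_derivative_iff tendsto_at_iff_sequentially
proof (intro allI impI)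
  fix X :: "nat \<Rightarrow> real"
  assume X: "\<forall>i. X i \<in> UNIV - {x}" "X \<longlonglongrightarrow> x"
  have Xne: "X i \<noteq> x" for i using X(1) by auto
  obtain K where K: "K > 0" "\<And>n. norm (X n) \<le> K"
    using convergent_imp_Bseq[OF convergentI[OF X(2)]] by (auto elim: BseqE)
  define B where "B = K + \<bar>x\<bar>"
  have XB: "\<bar>X n - x\<bar> \<le> B" for n using K(2)[of n] unfolding B_def by auto
  define q where "q = (\<lambda>k t. (w p (X k) t - w p x t) / (X k - x))"
  define h where "h = (\<lambda>t. 2 * w (p+1) (x - B) t)"
  define g where "g = (\<lambda>t. -2 * w (p+1) x t)"
  have qint: "(q k has_integral (FF p (X k) - FF p x) / (X k - x)) {0<..}" for k
    unfolding q_def using p by (intro has_integral_divide has_integral_diff FF_has)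
  have hint: "h integrable_on {0<..}"
    unfolding h_def using p w_int[of "p+1" "x - B"] integrable_on_cmult_left by auto
  have bound: "norm (q k t) \<le> h t" if t: "t \<in> {0<..}" for k t
  proof -
    have t0: "t > 0" using t by simp
    let ?d = "X k - x"
    have "q k t = w p x t * (exp (- 2 * ?d * t) - 1) / ?d"
      unfolding q_def w_move[of p "X k" t x] by (simp add: algebra_simps)
    hence "norm (q k t) = w p x t * \<bar>exp (- 2 * ?d * t) - 1\<bar> / \<bar>?d\<bar>"
      by (simp add: abs_mult w_nonneg)
    also have "\<dots> \<le> w p x t * (\<bar>- 2 * ?d * t\<bar> * exp \<bar>- 2 * ?d * t\<bar>) / \<bar>?d\<bar>"
      by (intro divide_right_mono mult_left_mono abs_exp_minus_one w_nonneg) auto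
    also have "\<dots> = w p x t * (2 * t) * exp (2 * \<bar>?d\<bar> * t)"
    proof -
      have e: "\<bar>- 2 * ?d * t\<bar> = 2 * \<bar>?d\<bar> * t" using t0 by (simp only: abs_mult)
      show ?thesis unfolding e using Xne[of k] by (simp add: field_simps)
    qed
    also have "\<dots> \<le> w p x t * (2 * t) * exp (2 * B * t)"
      using XB[of k] t0 w_nonneg[of p x t]
      by (intro mult_left_mono) (auto intro!: mult_right_mono)
    also have "\<dots> = h t"
      unfolding h_def w_shift1[OF t0, of p "x - B"] w_move[of p "x - B" t x]
      by (simp add: algebra_simps)
    finally show ?thesis .
  qed
  have conv: "(\<lambda>k. q k t) \<longlonglongrightarrow> g t" if t: "t \<in> {0<..}" for t
  proof -
    have t0: "t > 0" using t by simp
    have "((\<lambda>y. w p y t) has_real_derivative (w p x t * (- 2 * t))) (at x)"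
      unfolding w_def by (auto intro!: derivative_eq_intros simp: algebra_simps)
    from deriv_seq[OF this X(2) Xne] show ?thesis
      unfolding q_def g_def w_shift1[OF t0] by (simp add: algebra_simps)
  qed
  have "(\<lambda>k. integral {0<..} (q k)) \<longlonglongrightarrow> integral {0<..} g"
    by (rule dominated_convergence(2)[OF _ hint bound conv]) (use qint in blast)+
  moreover have "integral {0<..} (q k) = (FF p (X k) - FF p x) / (X k - x)" for k
    using qint by (rule integral_unique)
  moreover have "integral {0<..} g = -2 * FF (p+1) x"
    unfolding g_def using p by (intro integral_unique has_integral_mult_right FF_has) auto
  ultimately show "((\<lambda>y. (FF p y - FF p x) / (y - x)) \<circ> X) \<longlonglongrightarrow> -2 * FF (p+1) x"
    by (simp add: o_def)
qed


lemma key_identity: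
  fixes a x A0 A1 A2 A3 A4 :: real
  assumes a: "a > 0" and R0: "a * A0 = 2 * A2 + 2 * x * A1"
    and R1: "(a+1) * A1 = 2 * A3 + 2 * x * A2" and R2: "(a+2) * A2 = 2 * A4 + 2 * x * A3"
  shows "(- A1*A2)^2 * A0 + 2*(- A1*A2)*(2*A0*A2) * A1 + ((2*A0*A2)^2 + 2*(- A1*A2)*(- A0*A1)) * A2
         + 2*(2*A0*A2)*(- A0*A1) * A3 + (- A0*A1)^2 * A4
       = A0 * (2*A0*A2^2 - A1^2*A2 - A0*A1*A3) * (A2 + a*A0/2)"
proof -
  have e0: "A0 = (2 * A2 + 2 * x * A1) / a" using R0 a by (simp add: field_simps)
  have e3: "A3 = ((a+1) * A1 - 2 * x * A2) / 2" using R1 by simp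
  have e4: "A4 = ((a+2) * A2 - 2 * x * A3) / 2" using R2 by simp
  show ?thesis unfolding e4 unfolding e3 unfolding e0 using a
    by (simp add: field_simps power2_eq_square)
qed


lemma quot_deriv:
  fixes f0 f1 f2 :: "real \<Rightarrow> real"
  assumes "(f0 has_real_derivative d0) (at x)" "(f1 has_real_derivative d1) (at x)"
    "(f2 has_real_derivative d2) (at x)" "f0 x \<noteq> 0" "f2 x \<noteq> 0"
  shows "((\<lambda>y. f1 y ^ 2 / (f0 y * f2 y)) has_real_derivative
     (2 * f1 x * d1 * (f0 x * f2 x) - f1 x ^ 2 * (d0 * f2 x + f0 x * d2)) / (f0 x * f2 x)^2) (at x)"
  using assms
  by (auto intro!: derivative_eq_intros simp: field_simps power2_eq_square)

lemma G_deriv_neg: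
  fixes a x :: real
  assumes a: "a > 0"
  shows "\<exists>D. ((\<lambda>y. FF a y ^ 2 / (FF (a-1) y * FF (a+1) y)) has_real_derivative D) (at x) \<and> D < 0"
proof -
  define A0 where "A0 = FF (a-1) x"
  define A1 where "A1 = FF a x"
  define A2 where "A2 = FF (a+1) x"
  define A3 where "A3 = FF (a+2) x"
  define A4 where "A4 = FF (a+3) x"
  have pos: "A0 > 0" "A1 > 0" "A2 > 0" "A3 > 0" "A4 > 0"
    unfolding A0_def A1_def A2_def A3_def A4_def using a by (auto intro!: FF_pos)
  have d0: "((\<lambda>y. FF (a-1) y) has_real_derivative (-2 * A1)) (at x)"
    using FF_deriv[of "a-1" x] a unfolding A1_def by simp
  have d1: "((\<lambda>y. FF a y) has_real_derivative (-2 * A2)) (at x)"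
    using FF_deriv[of "a" x] a unfolding A2_def by simp
  have d2: "((\<lambda>y. FF (a+1) y) has_real_derivative (-2 * A3)) (at x)"
    using FF_deriv[of "a+1" x] a unfolding A3_def by (simp add: add.assoc)
  have R0: "a * A0 = 2 * A2 + 2 * x * A1"
    using recur[of "a-1" x] a unfolding A0_def A1_def A2_def by (simp add: add.commute)
  have R1: "(a+1) * A1 = 2 * A3 + 2 * x * A2"
    using recur[of "a" x] a unfolding A1_def A2_def A3_def by simp
  have R2: "(a+2) * A2 = 2 * A4 + 2 * x * A3"
    using recur[of "a+1" x] a unfolding A2_def A3_def A4_def by (simp add: add.assoc add.commute)
  define T where "T = 2*A0*A2^2 - A1^2*A2 - A0*A1*A3"
  have Q: "(- A1*A2)^2 * A0 + 2*(- A1*A2)*(2*A0*A2) * A1 + ((2*A0*A2)^2 + 2*(- A1*A2)*(- A0*A1)) * A2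
         + 2*(2*A0*A2)*(- A0*A1) * A3 + (- A0*A1)^2 * A4 > 0"
  proof -
    have "- A0*A1 \<noteq> 0" using pos by simp
    from QF[of "a-1" "- A0*A1" "- A1*A2" x "2*A0*A2", OF _ this] a
    show ?thesis unfolding A0_def A1_def A2_def A3_def A4_def
      by (simp add: add.assoc add.commute)
  qed
  hence "A0 * T * (A2 + a*A0/2) > 0"
    unfolding T_def key_identity[OF a R0 R1 R2] .
  hence T: "T > 0" using pos a
    by (metis add_pos_pos divide_pos_pos mult_pos_pos zero_less_mult_pos zero_less_mult_pos2 zero_less_numeral)
  let ?D = "(2 * A1 * (-2 * A2) * (A0 * A2) - A1^2 * ((-2 * A1) * A2 + A0 * (-2 * A3))) / (A0 * A2)^2"
  have "((\<lambda>y. FF a y ^ 2 / (FF (a-1) y * FF (a+1) y)) has_real_derivative ?D) (at x)"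
    using quot_deriv[OF d0 d1 d2] pos unfolding A0_def A1_def A2_def A3_def
    by (simp add: algebra_simps)
  moreover have "?D = -2 * A1 * T / (A0 * A2)^2"
    unfolding T_def by (simp add: power2_eq_square algebra_simps)
  moreover have "-2 * A1 * T / (A0 * A2)^2 < 0"
    using pos T by (simp add: divide_neg_pos)
  ultimately show ?thesis by auto
qed

theorem theorem3p1:
  fixes \<nu> :: real
  assumes "\<nu> < 0"
  shows "strict_antimono_on UNIV (R_ratio \<nu>)"
proof -
  define a where "a = - \<nu>"
  have a: "a > 0" using assms unfolding a_def by simp
  define G where "G = (\<lambda>y. FF a y ^ 2 / (FF (a-1) y * FF (a+1) y))"
  define K where "K = Gamma a * Gamma (a+2) / Gamma (a+1) ^ 2"
  have K: "K > 0" unfolding K_def using a by (intro divide_pos_pos mult_pos_pos zero_less_power Gamma_real_pos) auto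
  have RG: "R_ratio \<nu> y = K * G y" for y
  proof -
    have "R_ratio \<nu> y = (FF a y / Gamma (a+1))^2 / ((FF (a-1) y / Gamma a) * (FF (a+1) y / Gamma (a+2)))"
      unfolding R_ratio_def hermite_FF a_def by (simp add: algebra_simps)
    also have "\<dots> = K * G y"
      unfolding K_def G_def using a by (simp add: field_simps power2_eq_square)
    finally show ?thesis .
  qed
  show ?thesis
  proof (rule monotone_onI)
    fix r s :: real assume "r \<in> UNIV" "s \<in> UNIV" "r < s"
    have "G s < G r"
      using DERIV_neg_imp_decreasing[OF \<open>r < s\<close>, of G] G_deriv_neg[OF a] unfolding G_def by blast
    thus "R_ratio \<nu> s < R_ratio \<nu> r" unfolding RG using K by simp
  qed
qed

end
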